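(* Consider $N$ double-integrator agents $$\dot x_i=v_i,\qquad \dot v_i=\sum_{j=1}^N\alpha_{ij}\big((x_j-x_i)+(y_j-y_i)\big),\qquad y_i=\mathrm{sat}(v_i),\qquad i\in\{1,\dots,N\},$$ where the constant weights $\alpha_{ij}=\alpha_{ji}\ge0$ define an undirected connected graph and $\mathrm{sat}(v)=\mathrm{sign}(v)\min\{|v|,s\}$ with a common level $s>0$. Assume the agents are not in consensus at $t_0$ (i.e. it is not the case that all $x_i(t_0)$ are equal and all $v_i(t_0)$ are equal). Then $\lim_{t\to\infty}(x_i(t)-x_j(t))=0$ and $\lim_{t\to\infty}(v_i(t)-v_j(t))=0$ for all $i,j$ if and only if $$\frac1N\Big|\sum_{i=1}^N v_i(t_0)\Big|\le s.$$
   Context: The graph is connected if any two nodes are joined by a path of edges $\{i,j\}$ with $\alpha_{ij}>0$. *)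

theory Defs
  imports "HOL-Analysis.Analysis"
begin

definition sat :: "real \<Rightarrow> real \<Rightarrow> real" where
  "sat s w = sgn w * min \<bar>w\<bar> s"

definition graph_connected :: "('n \<Rightarrow> 'n \<Rightarrow> real) \<Rightarrow> bool" where
  "graph_connected \<alpha> \<longleftrightarrow> (\<forall>i j. (\<lambda>a b. \<alpha> a b > 0)\<^sup>*\<^sup>* i j)"

end

theory Submission
  imports Defs
begin


lemma deriv_at_interior:
  assumes "(f has_real_derivative D) (at t within {t0..})" "t0 < t"
  shows "(f has_real_derivative D) (at t)"
  using assms at_within_interior[of t "{t0..}"] by simp

lemma mvt_within:
  fixes f f' :: "real \<Rightarrow> real"
  assumes d: "\<And>t. t \<ge> t0 \<Longrightarrow> (f has_real_derivative f' t) (at t within {t0..})"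
    and a: "t0 \<le> a" and ab: "a < b"
  shows "\<exists>z. a < z \<and> z < b \<and> f b - f a = (b - a) * f' z"
proof -
  have c: "continuous_on {a..b} f"
  proof (rule DERIV_continuous_on[where D=f'])
    fix t assume "t \<in> {a..b}"
    then have t: "t0 \<le> t" using a by auto
    have "{a..b} \<subseteq> {t0..}" using a by auto
    then show "(f has_real_derivative f' t) (at t within {a..b})"
      by (rule DERIV_subset[OF d[OF t]])
  qed
  have "\<And>t. a < t \<Longrightarrow> t < b \<Longrightarrow> f differentiable (at t)"
  proof -
    fix t assume "a < t" "t < b"
    then have "DERIV f t :> f' t" using d[of t] a deriv_at_interior[of f "f' t" t t0] by simp
    then show "f differentiable (at t)" unfolding real_differentiable_def by blast
  qed
  from MVT[OF ab c this] obtain l z where z: "a < z" "z < b" "DERIV f z :> l" "f b - f a = (b - a) * l"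
    by blast
  have "DERIV f z :> f' z" using d[of z] z a deriv_at_interior by force
  with z DERIV_unique have "l = f' z" by blast
  with z show ?thesis by blast
qed

lemma deriv_mono:
  fixes f f' :: "real \<Rightarrow> real"
  assumes d: "\<And>t. t \<ge> t0 \<Longrightarrow> (f has_real_derivative f' t) (at t within {t0..})"
    and nn: "\<And>t. t \<ge> t0 \<Longrightarrow> f' t \<ge> 0" and a: "t0 \<le> a" and ab: "a \<le> b"
  shows "f a \<le> f b"
proof (cases "a = b")
  case False
  then have "a < b" using ab by simp
  from mvt_within[OF d a this] obtain z where "a < z" "z < b" "f b - f a = (b - a) * f' z" by blast
  moreover have "f' z \<ge> 0" using nn \<open>a < z\<close> a by simp
  moreover have "(b - a) * f' z \<ge> 0" using \<open>a < b\<close> \<open>f' z \<ge> 0\<close> by simp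
  ultimately show ?thesis by linarith
qed simp

lemma deriv_const:
  fixes f f' :: "real \<Rightarrow> real"
  assumes d: "\<And>t. t \<ge> t0 \<Longrightarrow> (f has_real_derivative f' t) (at t within {t0..})"
    and z: "\<And>t. t \<ge> T \<Longrightarrow> f' t = 0" and T: "t0 \<le> T" "T \<le> a" and ab: "a \<le> b"
  shows "f b = f a"
proof (cases "a = b")
  case False
  then have "a < b" using ab by simp
  from mvt_within[OF d _ this] T obtain w where "a < w" "w < b" "f b - f a = (b - a) * f' w" by force
  moreover have "f' w = 0" using z \<open>a < w\<close> T by simp
  ultimately show ?thesis by simp
qed simp

lemma barbalat:
  fixes f f' :: "real \<Rightarrow> real"
  assumes d: "\<And>t. t \<ge> t0 \<Longrightarrow> (f has_real_derivative f' t) (at t within {t0..})"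
    and cauchy: "\<And>e. e > 0 \<Longrightarrow> \<exists>T. \<forall>a b. T \<le> a \<longrightarrow> T \<le> b \<longrightarrow> \<bar>f a - f b\<bar> < e"
    and lip: "\<And>a b. t0 \<le> a \<Longrightarrow> t0 \<le> b \<Longrightarrow> \<bar>f' a - f' b\<bar> \<le> K * \<bar>a - b\<bar>"
  shows "(f' \<longlongrightarrow> 0) at_top"
proof (rule tendstoI)
  fix e :: real assume e: "e > 0"
  define K' where "K' = \<bar>K\<bar> + 1"
  have K': "K' > 0" "\<bar>K\<bar> < K'" unfolding K'_def by auto
  define \<delta> where "\<delta> = e / (2 * K')"
  have \<delta>: "\<delta> > 0" "\<bar>K\<bar> * \<delta> \<le> e / 2" using e K' unfolding \<delta>_def
    by (auto simp: field_simps)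
  obtain T where T: "\<forall>a b. T \<le> a \<longrightarrow> T \<le> b \<longrightarrow> \<bar>f a - f b\<bar> < \<delta> * e / 2"
    using cauchy[of "\<delta> * e / 2"] \<delta> e by auto
  have "\<forall>t\<ge>max T t0. \<bar>f' t\<bar> < e"
  proof (intro allI impI, rule ccontr)
    fix t assume t: "max T t0 \<le> t" and ne: "\<not> \<bar>f' t\<bar> < e"
    from mvt_within[OF d _, of t "t + \<delta>"] t \<delta> obtain z where
      z: "t < z" "z < t + \<delta>" "f (t + \<delta>) - f t = \<delta> * f' z" by force
    have "\<bar>f' z - f' t\<bar> \<le> K * \<bar>z - t\<bar>" using lip[of z t] t z by simp
    also have "\<dots> \<le> \<bar>K\<bar> * \<delta>" using z by (intro mult_mono) auto
    finally have "\<bar>f' z\<bar> \<ge> e / 2" using ne \<delta> by linarith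
    then have "\<delta> * \<bar>f' z\<bar> \<ge> \<delta> * (e / 2)" using \<delta> by (intro mult_left_mono) auto
    moreover have "\<bar>f (t + \<delta>) - f t\<bar> < \<delta> * e / 2" using T t \<delta> by simp
    ultimately show False using z \<delta> by (simp add: abs_mult)
  qed
  then have "\<exists>N. \<forall>t\<ge>N. dist (f' t) 0 < e" by (auto simp: dist_real_def intro!: exI[of _ "max T t0"])
  then show "eventually (\<lambda>t. dist (f' t) 0 < e) at_top"
    unfolding eventually_at_top_linorder .
qed




lemma sat_alt: "s > 0 \<Longrightarrow> sat s a = max (-s) (min s a)"
  unfolding sat_def by (cases "a > 0"; cases "a < 0") (auto simp: sgn_if min_def max_def)

lemma sat_mono: "s > 0 \<Longrightarrow> a \<le> b \<Longrightarrow> sat s a \<le> sat s b"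
  by (simp add: sat_alt)

lemma sat_lip: "s > 0 \<Longrightarrow> \<bar>sat s a - sat s b\<bar> \<le> \<bar>a - b\<bar>"
  by (simp add: sat_alt max_def min_def)

lemma sat_bound: "s > 0 \<Longrightarrow> \<bar>sat s a\<bar> \<le> s"
  by (auto simp: sat_alt max_def min_def abs_if)

lemma sat_id: "s > 0 \<Longrightarrow> \<bar>a\<bar> \<le> s \<Longrightarrow> sat s a = a"
  by (auto simp: sat_alt max_def min_def abs_if split: if_splits)

lemma sat_hi: "s > 0 \<Longrightarrow> a \<ge> s \<Longrightarrow> sat s a = s"
  by (auto simp: sat_alt max_def min_def abs_if)

lemma sat_lo: "s > 0 \<Longrightarrow> a \<le> -s \<Longrightarrow> sat s a = -s"
  by (simp add: sat_alt max_def min_def)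

lemma sat_pos: "s > 0 \<Longrightarrow> sat s a > 0 \<Longrightarrow> sat s a \<le> a"
  by (simp add: sat_alt max_def min_def split: if_splits)

lemma sat_neg: "s > 0 \<Longrightarrow> sat s a < 0 \<Longrightarrow> a \<le> sat s a"
  by (simp add: sat_alt max_def min_def split: if_splits)

lemma sat_prod_nonneg: "s > 0 \<Longrightarrow> 0 \<le> (a - b) * (sat s a - sat s b)"
proof (cases "a \<le> b")
  case True
  assume s: "s > 0"
  then have "sat s a \<le> sat s b" using sat_mono True by blast
  then show ?thesis using True by (simp add: mult_nonpos_nonpos)
next
  case False
  assume s: "s > 0"
  then have "sat s b \<le> sat s a" using sat_mono False by simp
  then show ?thesis using False by simp
qed

lemma sat_prod: "s > 0 \<Longrightarrow> (sat s a - sat s b)^2 \<le> (a - b) * (sat s a - sat s b)"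
proof -
  assume s: "s > 0"
  have l: "\<bar>sat s a - sat s b\<bar> \<le> \<bar>a - b\<bar>" using sat_lip s by blast
  have n: "0 \<le> (a - b) * (sat s a - sat s b)" using sat_prod_nonneg s by blast
  have "(sat s a - sat s b)^2 = \<bar>sat s a - sat s b\<bar> * \<bar>sat s a - sat s b\<bar>"
    by (simp add: power2_eq_square abs_mult_self_eq)
  also have "\<dots> \<le> \<bar>a - b\<bar> * \<bar>sat s a - sat s b\<bar>" using l by (intro mult_right_mono) auto
  also have "\<dots> = (a - b) * (sat s a - sat s b)" using n by (simp add: abs_mult[symmetric])
  finally show ?thesis .
qed

lemma sym_sum:
  fixes a :: "'n::finite \<Rightarrow> 'n \<Rightarrow> real"
  assumes sym: "\<And>i j. a i j = a j i"
  shows "(\<Sum>i\<in>UNIV. \<Sum>j\<in>UNIV. a i j * p i * (d j - d i))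
       = - (\<Sum>i\<in>UNIV. \<Sum>j\<in>UNIV. a i j * (p i - p j) * (d i - d j)) / 2"
proof -
  define A where "A = (\<Sum>i\<in>UNIV. \<Sum>j\<in>UNIV. a i j * p i * (d j - d i))"
  have "A = (\<Sum>j\<in>UNIV. \<Sum>i\<in>UNIV. a i j * p i * (d j - d i))"
    unfolding A_def by (rule sum.swap)
  also have "\<dots> = (\<Sum>i\<in>UNIV. \<Sum>j\<in>UNIV. a i j * p j * (d i - d j))"
    using sym by simp
  finally have A2: "A = (\<Sum>i\<in>UNIV. \<Sum>j\<in>UNIV. a i j * p j * (d i - d j))" .
  have "2 * A = A + A" by simp
  also have "\<dots> = (\<Sum>i\<in>UNIV. \<Sum>j\<in>UNIV. a i j * p i * (d j - d i)) + (\<Sum>i\<in>UNIV. \<Sum>j\<in>UNIV. a i j * p j * (d i - d j))"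
    by (rule arg_cong2[of _ _ _ _ "(+)"]) (fact A_def, fact A2)
  also have "\<dots> = (\<Sum>i\<in>UNIV. \<Sum>j\<in>UNIV. a i j * p i * (d j - d i) + a i j * p j * (d i - d j))"
    by (simp add: sum.distrib)
  also have "\<dots> = (\<Sum>i\<in>UNIV. \<Sum>j\<in>UNIV. - (a i j * (p i - p j) * (d i - d j)))"
    by (intro sum.cong refl) (simp add: algebra_simps)
  also have "\<dots> = - (\<Sum>i\<in>UNIV. \<Sum>j\<in>UNIV. a i j * (p i - p j) * (d i - d j))"
    by (simp add: sum_negf)
  finally show ?thesis unfolding A_def by simp
qed

lemma conn_pairs:
  assumes conn: "graph_connected \<alpha>"
    and refl: "\<And>i. P i i" and trans: "\<And>i j k. P i j \<Longrightarrow> P j k \<Longrightarrow> P i k"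
    and edge: "\<And>i j. \<alpha> i j > 0 \<Longrightarrow> P i j"
  shows "P i j"
proof -
  have "(\<lambda>a b. \<alpha> a b > 0)\<^sup>*\<^sup>* i j" using conn unfolding graph_connected_def by blast
  then show ?thesis
  proof (induction rule: rtranclp_induct)
    case base then show ?case by (rule refl)
  next
    case (step y z) then show ?case using trans edge by blast
  qed
qed

definition bnd :: "real \<Rightarrow> (real \<Rightarrow> real) \<Rightarrow> bool" where
  "bnd t0 f \<longleftrightarrow> (\<exists>B. \<forall>t\<ge>t0. \<bar>f t\<bar> \<le> B)"

definition lip :: "real \<Rightarrow> (real \<Rightarrow> real) \<Rightarrow> bool" where
  "lip t0 f \<longleftrightarrow> (\<exists>K. \<forall>a b. t0 \<le> a \<longrightarrow> t0 \<le> b \<longrightarrow> \<bar>f a - f b\<bar> \<le> K * \<bar>a - b\<bar>)"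

lemma bndE: assumes "bnd t0 f" obtains B where "B \<ge> 0" "\<And>t. t \<ge> t0 \<Longrightarrow> \<bar>f t\<bar> \<le> B"
proof -
  obtain B where "\<forall>t\<ge>t0. \<bar>f t\<bar> \<le> B" using assms unfolding bnd_def by blast
  then show ?thesis using that[of "max B 0"] by force
qed

lemma lipE: assumes "lip t0 f"
  obtains K where "K \<ge> 0" "\<And>a b. t0 \<le> a \<Longrightarrow> t0 \<le> b \<Longrightarrow> \<bar>f a - f b\<bar> \<le> K * \<bar>a - b\<bar>"
proof -
  obtain K where K: "\<forall>a b. t0 \<le> a \<longrightarrow> t0 \<le> b \<longrightarrow> \<bar>f a - f b\<bar> \<le> K * \<bar>a - b\<bar>"
    using assms unfolding lip_def by blast
  have "\<And>a b. t0 \<le> a \<Longrightarrow> t0 \<le> b \<Longrightarrow> \<bar>f a - f b\<bar> \<le> max K 0 * \<bar>a - b\<bar>"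
  proof -
    fix a b assume "t0 \<le> a" "t0 \<le> b"
    then have "\<bar>f a - f b\<bar> \<le> K * \<bar>a - b\<bar>" using K by blast
    also have "\<dots> \<le> max K 0 * \<bar>a - b\<bar>" by (intro mult_right_mono) auto
    finally show "\<bar>f a - f b\<bar> \<le> max K 0 * \<bar>a - b\<bar>" .
  qed
  then show ?thesis using that[of "max K 0"] by force
qed

lemma bnd_const[simp]: "bnd t0 (\<lambda>t. c)"
  unfolding bnd_def by blast

lemma bnd_add: "bnd t0 f \<Longrightarrow> bnd t0 g \<Longrightarrow> bnd t0 (\<lambda>t. f t + g t)"
proof -
  assume "bnd t0 f" "bnd t0 g"
  then obtain B C where "\<And>t. t \<ge> t0 \<Longrightarrow> \<bar>f t\<bar> \<le> B" "\<And>t. t \<ge> t0 \<Longrightarrow> \<bar>g t\<bar> \<le> C"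
    by (metis bndE)
  then have "\<forall>t\<ge>t0. \<bar>f t + g t\<bar> \<le> B + C" by (smt (verit))
  then show ?thesis unfolding bnd_def by blast
qed

lemma bnd_uminus: "bnd t0 f \<Longrightarrow> bnd t0 (\<lambda>t. - f t)"
  unfolding bnd_def by simp

lemma bnd_diff: "bnd t0 f \<Longrightarrow> bnd t0 g \<Longrightarrow> bnd t0 (\<lambda>t. f t - g t)"
  using bnd_add[of t0 f "\<lambda>t. - g t"] bnd_uminus[of t0 g] by simp

lemma bnd_mult: "bnd t0 f \<Longrightarrow> bnd t0 g \<Longrightarrow> bnd t0 (\<lambda>t. f t * g t)"
proof -
  assume "bnd t0 f" "bnd t0 g"
  then obtain B C where B: "B \<ge> 0" "\<And>t. t \<ge> t0 \<Longrightarrow> \<bar>f t\<bar> \<le> B"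
    and C: "C \<ge> 0" "\<And>t. t \<ge> t0 \<Longrightarrow> \<bar>g t\<bar> \<le> C"
    by (metis bndE)
  have "\<forall>t\<ge>t0. \<bar>f t * g t\<bar> \<le> B * C"
    using B C by (auto simp: abs_mult intro!: mult_mono)
  then show ?thesis unfolding bnd_def by blast
qed

lemma bnd_sum: "(\<And>i. i \<in> S \<Longrightarrow> bnd t0 (f i)) \<Longrightarrow> bnd t0 (\<lambda>t. \<Sum>i\<in>S. f i t)"
proof (induction S rule: infinite_finite_induct)
  case (insert x F) then show ?case by (simp add: bnd_add)
qed simp_all

lemma lip_const[simp]: "lip t0 (\<lambda>t. c)"
  unfolding lip_def by (intro exI[of _ 0]) simp

lemma lip_add: "lip t0 f \<Longrightarrow> lip t0 g \<Longrightarrow> lip t0 (\<lambda>t. f t + g t)"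
proof -
  assume "lip t0 f" "lip t0 g"
  then obtain K L where K: "\<And>a b. t0 \<le> a \<Longrightarrow> t0 \<le> b \<Longrightarrow> \<bar>f a - f b\<bar> \<le> K * \<bar>a - b\<bar>"
    and L: "\<And>a b. t0 \<le> a \<Longrightarrow> t0 \<le> b \<Longrightarrow> \<bar>g a - g b\<bar> \<le> L * \<bar>a - b\<bar>"
    by (metis lipE)
  have "\<forall>a b. t0 \<le> a \<longrightarrow> t0 \<le> b \<longrightarrow> \<bar>(f a + g a) - (f b + g b)\<bar> \<le> (K + L) * \<bar>a - b\<bar>"
  proof (intro allI impI)
    fix a b assume "t0 \<le> a" "t0 \<le> b"
    then have "\<bar>f a - f b\<bar> \<le> K * \<bar>a - b\<bar>" "\<bar>g a - g b\<bar> \<le> L * \<bar>a - b\<bar>" using K L by auto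
    then show "\<bar>(f a + g a) - (f b + g b)\<bar> \<le> (K + L) * \<bar>a - b\<bar>" by (simp add: algebra_simps)
  qed
  then show ?thesis unfolding lip_def by blast
qed

lemma lip_uminus: "lip t0 f \<Longrightarrow> lip t0 (\<lambda>t. - f t)"
  unfolding lip_def by (simp add: abs_minus_commute)

lemma lip_diff: "lip t0 f \<Longrightarrow> lip t0 g \<Longrightarrow> lip t0 (\<lambda>t. f t - g t)"
  using lip_add[of t0 f "\<lambda>t. - g t"] lip_uminus[of t0 g] by simp

lemma lip_mult: "lip t0 f \<Longrightarrow> lip t0 g \<Longrightarrow> bnd t0 f \<Longrightarrow> bnd t0 g \<Longrightarrow> lip t0 (\<lambda>t. f t * g t)"
proof -
  assume "lip t0 f" "lip t0 g" "bnd t0 f" "bnd t0 g"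
  then obtain K L B C where K: "K \<ge> 0" "\<And>a b. t0 \<le> a \<Longrightarrow> t0 \<le> b \<Longrightarrow> \<bar>f a - f b\<bar> \<le> K * \<bar>a - b\<bar>"
    and L: "L \<ge> 0" "\<And>a b. t0 \<le> a \<Longrightarrow> t0 \<le> b \<Longrightarrow> \<bar>g a - g b\<bar> \<le> L * \<bar>a - b\<bar>"
    and B: "B \<ge> 0" "\<And>t. t \<ge> t0 \<Longrightarrow> \<bar>f t\<bar> \<le> B"
    and C: "C \<ge> 0" "\<And>t. t \<ge> t0 \<Longrightarrow> \<bar>g t\<bar> \<le> C"
    by (metis lipE bndE)
  have "\<forall>a b. t0 \<le> a \<longrightarrow> t0 \<le> b \<longrightarrow> \<bar>f a * g a - f b * g b\<bar> \<le> (B * L + C * K) * \<bar>a - b\<bar>"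
  proof (intro allI impI)
    fix a b assume ab: "t0 \<le> a" "t0 \<le> b"
    have "f a * g a - f b * g b = f a * (g a - g b) + g b * (f a - f b)" by (simp add: algebra_simps)
    then have "\<bar>f a * g a - f b * g b\<bar> \<le> \<bar>f a\<bar> * \<bar>g a - g b\<bar> + \<bar>g b\<bar> * \<bar>f a - f b\<bar>"
      by (metis abs_mult abs_triangle_ineq)
    also have "\<dots> \<le> B * (L * \<bar>a - b\<bar>) + C * (K * \<bar>a - b\<bar>)"
      using ab B C K L by (intro add_mono mult_mono) auto
    finally show "\<bar>f a * g a - f b * g b\<bar> \<le> (B * L + C * K) * \<bar>a - b\<bar>" by (simp add: algebra_simps)
  qed
  then show ?thesis unfolding lip_def by blast
qed

lemma lip_sum: "(\<And>i. i \<in> S \<Longrightarrow> lip t0 (f i)) \<Longrightarrow> lip t0 (\<lambda>t. \<Sum>i\<in>S. f i t)"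
proof (induction S rule: infinite_finite_induct)
  case (insert x F) then show ?case by (simp add: lip_add)
qed simp_all

lemma lip_sat: "s > 0 \<Longrightarrow> lip t0 f \<Longrightarrow> lip t0 (\<lambda>t. sat s (f t))"
proof -
  assume s: "s > 0" and "lip t0 f"
  then obtain K where K: "\<And>a b. t0 \<le> a \<Longrightarrow> t0 \<le> b \<Longrightarrow> \<bar>f a - f b\<bar> \<le> K * \<bar>a - b\<bar>"
    by (metis lipE)
  have "\<forall>a b. t0 \<le> a \<longrightarrow> t0 \<le> b \<longrightarrow> \<bar>sat s (f a) - sat s (f b)\<bar> \<le> K * \<bar>a - b\<bar>"
    using K sat_lip[OF s] order_trans by blast
  then show ?thesis unfolding lip_def by blast
qed

lemma lip_deriv:
  fixes f f' :: "real \<Rightarrow> real"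
  assumes d: "\<And>t. t \<ge> t0 \<Longrightarrow> (f has_real_derivative f' t) (at t within {t0..})"
    and b: "bnd t0 f'"
  shows "lip t0 f"
proof -
  obtain B where B: "B \<ge> 0" "\<And>t. t \<ge> t0 \<Longrightarrow> \<bar>f' t\<bar> \<le> B" using b by (metis bndE)
  have key: "\<bar>f b - f a\<bar> \<le> B * \<bar>b - a\<bar>" if ab: "t0 \<le> a" "a \<le> b" for a b
  proof (cases "a = b")
    case False
    then have "a < b" using ab by simp
    from mvt_within[OF d ab(1) this] obtain z where z: "a < z" "z < b" "f b - f a = (b - a) * f' z" by blast
    have "\<bar>f b - f a\<bar> = \<bar>b - a\<bar> * \<bar>f' z\<bar>" using z by (simp add: abs_mult)
    also have "\<dots> \<le> \<bar>b - a\<bar> * B" using B(2)[of z] z ab by (intro mult_left_mono) auto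
    finally show ?thesis by (simp add: mult.commute)
  qed simp
  have "\<forall>a b. t0 \<le> a \<longrightarrow> t0 \<le> b \<longrightarrow> \<bar>f a - f b\<bar> \<le> B * \<bar>a - b\<bar>"
  proof (intro allI impI)
    fix a b assume "t0 \<le> a" "t0 \<le> b"
    then show "\<bar>f a - f b\<bar> \<le> B * \<bar>a - b\<bar>"
      using key[of a b] key[of b a] by (cases "a \<le> b") (auto simp: abs_minus_commute)
  qed
  then show ?thesis unfolding lip_def by blast
qed




lemma abs_le_sq: "\<bar>a::real\<bar> \<le> a * a + 1"
proof (cases "\<bar>a\<bar> \<le> 1")
  case True then show ?thesis by (smt (verit) zero_le_square)
next
  case False
  then have "\<bar>a\<bar> * 1 \<le> \<bar>a\<bar> * \<bar>a\<bar>" by (intro mult_left_mono) auto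
  then show ?thesis by (simp add: abs_mult_self_eq)
qed

lemma le_dsum:
  fixes f :: "'n::finite \<Rightarrow> 'n \<Rightarrow> real"
  assumes "\<And>i j. f i j \<ge> 0"
  shows "f i j \<le> (\<Sum>i\<in>UNIV. \<Sum>j\<in>UNIV. f i j)"
proof -
  have "f i j \<le> (\<Sum>j\<in>UNIV. f i j)" using assms by (intro member_le_sum) auto
  also have "\<dots> \<le> (\<Sum>i\<in>UNIV. \<Sum>j\<in>UNIV. f i j)"
    using assms by (intro member_le_sum[of i UNIV "\<lambda>i. \<Sum>j\<in>UNIV. f i j"] sum_nonneg) auto
  finally show ?thesis .
qed

lemma tendsto_sq_zero: "((\<lambda>t. g t * g t) \<longlongrightarrow> 0) F \<Longrightarrow> ((g::_ \<Rightarrow> real) \<longlongrightarrow> 0) F"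
proof -
  assume "((\<lambda>t. g t * g t) \<longlongrightarrow> 0) F"
  from tendsto_real_sqrt[OF this] have "((\<lambda>t. \<bar>g t\<bar>) \<longlongrightarrow> 0) F" by simp
  then show ?thesis by (rule tendsto_rabs_zero_cancel)
qed

lemma bnd_tendsto_mult:
  assumes "bnd t0 g" "(h \<longlongrightarrow> 0) at_top"
  shows "((\<lambda>t. g t * h t) \<longlongrightarrow> (0::real)) at_top"
proof -
  obtain B where B: "B \<ge> 0" "\<And>t. t \<ge> t0 \<Longrightarrow> \<bar>g t\<bar> \<le> B" using assms(1) by (metis bndE)
  have h: "((\<lambda>t. B * \<bar>h t\<bar>) \<longlongrightarrow> 0) at_top"
    using tendsto_mult_right_zero[OF tendsto_rabs_zero[OF assms(2)], of B] by simp
  have "eventually (\<lambda>t. \<bar>g t * h t\<bar> \<le> B * \<bar>h t\<bar>) at_top"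
    unfolding eventually_at_top_linorder
    using B by (intro exI[of _ t0]) (auto simp: abs_mult intro: mult_right_mono)
  then have "eventually (\<lambda>t. - (B * \<bar>h t\<bar>) \<le> g t * h t) at_top"
     "eventually (\<lambda>t. g t * h t \<le> B * \<bar>h t\<bar>) at_top"
    by (auto elim!: eventually_mono)
  from tendsto_sandwich[OF this tendsto_minus[OF h, simplified] h] show ?thesis .
qed

locale sys =
  fixes \<alpha> :: "'n::finite \<Rightarrow> 'n \<Rightarrow> real"
    and s t0 :: real
    and x v :: "'n \<Rightarrow> real \<Rightarrow> real"
  assumes sym: "\<And>i j. \<alpha> i j = \<alpha> j i"
    and nonneg: "\<And>i j. \<alpha> i j \<ge> 0"
    and conn: "graph_connected \<alpha>"
    and s_pos: "s > 0"
    and dx: "\<And>i t. t \<ge> t0 \<Longrightarrow> (x i has_real_derivative v i t) (at t within {t0..})"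
    and dv: "\<And>i t. t \<ge> t0 \<Longrightarrow>
       (v i has_real_derivative
          (\<Sum>j\<in>UNIV. \<alpha> i j * ((x j t - x i t) + (sat s (v j t) - sat s (v i t)))))
        (at t within {t0..})"
begin

definition y where "y i t = sat s (v i t)"
definition F where "F i t = (\<Sum>j\<in>UNIV. \<alpha> i j * ((x j t - x i t) + (y j t - y i t)))"
definition N :: real where "N = real CARD('n)"
definition S0 where "S0 = (\<Sum>i\<in>UNIV. v i t0)"
definition P where "P t = (\<Sum>i\<in>UNIV. v i t * v i t)"
definition Q where "Q t = (\<Sum>i\<in>UNIV. \<Sum>j\<in>UNIV. \<alpha> i j * ((x i t - x j t) * (x i t - x j t)))"
definition V where "V t = P t / 2 + Q t / 4"
definition \<phi> where "\<phi> t = (\<Sum>i\<in>UNIV. \<Sum>j\<in>UNIV. \<alpha> i j * (v i t - v j t) * (y i t - y j t)) / 2"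

lemma N_pos: "N \<ge> 1" unfolding N_def by (simp add: Suc_le_eq)

lemma dv': "t \<ge> t0 \<Longrightarrow> (v i has_real_derivative F i t) (at t within {t0..})"
  using dv unfolding F_def y_def by blast

lemma sumF: "(\<Sum>i\<in>UNIV. F i t) = 0"
proof -
  have "(\<Sum>i\<in>UNIV. F i t) = (\<Sum>i\<in>UNIV. \<Sum>j\<in>UNIV. \<alpha> i j * 1 * ((x j t + y j t) - (x i t + y i t)))"
    unfolding F_def by (intro sum.cong refl) (simp add: algebra_simps)
  also have "\<dots> = 0" by (subst sym_sum[OF sym]) simp
  finally show ?thesis .
qed

lemma sumv: "t \<ge> t0 \<Longrightarrow> (\<Sum>i\<in>UNIV. v i t) = S0"
proof -
  have "\<exists>c. \<forall>t\<in>{t0..}. (\<Sum>i\<in>UNIV. v i t) = c"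
  proof (rule has_field_derivative_zero_constant)
    fix t assume "t \<in> {t0..}"
    then have "((\<lambda>t. \<Sum>i\<in>UNIV. v i t) has_real_derivative (\<Sum>i\<in>UNIV. F i t)) (at t within {t0..})"
      by (intro DERIV_sum dv') auto
    then show "((\<lambda>t. \<Sum>i\<in>UNIV. v i t) has_real_derivative 0) (at t within {t0..})"
      by (simp add: sumF)
  qed simp
  then obtain c where "\<forall>t\<in>{t0..}. (\<Sum>i\<in>UNIV. v i t) = c" by blast
  moreover assume "t \<ge> t0"
  ultimately show ?thesis unfolding S0_def by auto
qed

lemma phi_alt: "\<phi> t = (\<Sum>i\<in>UNIV. \<Sum>j\<in>UNIV. \<alpha> i j * ((v i t - v j t) * (y i t - y j t))) / 2"
  unfolding \<phi>_def by (simp add: mult.assoc)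

lemma phi_nonneg: "\<phi> t \<ge> 0"
  unfolding phi_alt y_def
  by (intro divide_nonneg_pos sum_nonneg mult_nonneg_nonneg[OF nonneg sat_prod_nonneg[OF s_pos]]) auto

lemma P_nonneg: "P t \<ge> 0" unfolding P_def by (intro sum_nonneg) auto
lemma Q_nonneg: "Q t \<ge> 0" unfolding Q_def by (intro sum_nonneg mult_nonneg_nonneg[OF nonneg zero_le_square])
lemma V_nonneg: "V t \<ge> 0" unfolding V_def using P_nonneg Q_nonneg by simp

lemma dV: "t \<ge> t0 \<Longrightarrow> (V has_real_derivative - \<phi> t) (at t within {t0..})"
proof -
  assume t: "t \<ge> t0"
  have dP: "(P has_real_derivative (\<Sum>i\<in>UNIV. F i t * v i t + F i t * v i t)) (at t within {t0..})"
    unfolding P_def[abs_def] by (intro DERIV_sum DERIV_mult dv'[OF t])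
  have dQ: "(Q has_real_derivative (\<Sum>i\<in>UNIV. \<Sum>j\<in>UNIV. \<alpha> i j *
      ((v i t - v j t) * (x i t - x j t) + (v i t - v j t) * (x i t - x j t)))) (at t within {t0..})"
    unfolding Q_def[abs_def] by (intro DERIV_sum DERIV_cmult DERIV_mult DERIV_diff dx[OF t])
  have dV0: "(V has_real_derivative (\<Sum>i\<in>UNIV. F i t * v i t + F i t * v i t) / 2 +
     (\<Sum>i\<in>UNIV. \<Sum>j\<in>UNIV. \<alpha> i j *
      ((v i t - v j t) * (x i t - x j t) + (v i t - v j t) * (x i t - x j t))) / 4) (at t within {t0..})"
    unfolding V_def[abs_def] by (intro DERIV_add DERIV_cdivide dP dQ)
  define X where "X = (\<Sum>i\<in>UNIV. \<Sum>j\<in>UNIV. \<alpha> i j * (v i t - v j t) * (x i t - x j t))"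
  define Y where "Y = (\<Sum>i\<in>UNIV. \<Sum>j\<in>UNIV. \<alpha> i j * (v i t - v j t) * (y i t - y j t))"
  have e1: "(\<Sum>i\<in>UNIV. F i t * v i t + F i t * v i t) / 2 = (\<Sum>i\<in>UNIV. v i t * F i t)"
    by (simp add: sum.distrib algebra_simps sum_distrib_left)
  have e2: "(\<Sum>i\<in>UNIV. v i t * F i t) = (\<Sum>i\<in>UNIV. \<Sum>j\<in>UNIV. \<alpha> i j * v i t * (x j t - x i t))
       + (\<Sum>i\<in>UNIV. \<Sum>j\<in>UNIV. \<alpha> i j * v i t * (y j t - y i t))"
    unfolding F_def sum_distrib_left sum.distrib[symmetric]
    by (intro sum.cong refl) (simp add: algebra_simps)
  have e3: "(\<Sum>i\<in>UNIV. \<Sum>j\<in>UNIV. \<alpha> i j * v i t * (x j t - x i t)) = - X / 2"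
    unfolding X_def by (rule sym_sum[OF sym])
  have e4: "(\<Sum>i\<in>UNIV. \<Sum>j\<in>UNIV. \<alpha> i j * v i t * (y j t - y i t)) = - Y / 2"
    unfolding Y_def by (rule sym_sum[OF sym])
  have e5: "(\<Sum>i\<in>UNIV. \<Sum>j\<in>UNIV. \<alpha> i j *
      ((v i t - v j t) * (x i t - x j t) + (v i t - v j t) * (x i t - x j t))) = 2 * X"
    unfolding X_def sum_distrib_left by (intro sum.cong refl) (simp add: algebra_simps)
  have "(\<Sum>i\<in>UNIV. F i t * v i t + F i t * v i t) / 2 +
     (\<Sum>i\<in>UNIV. \<Sum>j\<in>UNIV. \<alpha> i j *
      ((v i t - v j t) * (x i t - x j t) + (v i t - v j t) * (x i t - x j t))) / 4 = - \<phi> t"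
    unfolding e1 e2 e3 e4 e5 \<phi>_def Y_def[symmetric] by simp
  with dV0 show ?thesis by simp
qed

lemma V_mono: "t0 \<le> a \<Longrightarrow> a \<le> b \<Longrightarrow> V b \<le> V a"
proof -
  have "\<And>t. t0 \<le> t \<Longrightarrow> ((\<lambda>t. - V t) has_real_derivative \<phi> t) (at t within {t0..})"
    using DERIV_minus[OF dV] by simp
  moreover assume "t0 \<le> a" "a \<le> b"
  ultimately show ?thesis using deriv_mono[of t0 "\<lambda>t. - V t" \<phi> a b] phi_nonneg by auto
qed

end



lemma vspread:
  fixes w :: "'n::finite \<Rightarrow> real"
  assumes s: "s > 0" and sw: "(\<Sum>i\<in>UNIV. w i) = real CARD('n) * m" and m: "\<bar>m\<bar> \<le> s"
    and e: "0 < e" "e < s" and y: "\<And>i j. \<bar>sat s (w i) - sat s (w j)\<bar> \<le> e"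
  shows "\<bar>w i - w j\<bar> \<le> real CARD('n) * e"
proof -
  define n where "n = real CARD('n)"
  have n1: "n \<ge> 1" unfolding n_def by (simp add: Suc_le_eq)
  show ?thesis
  proof (cases "\<exists>k. w k > s")
    case True
    then obtain k where k: "w k > s" by blast
    then have sk: "sat s (w k) = s" using sat_hi[OF s] by simp
    have lo: "w j' \<ge> s - e" for j'
    proof -
      have "sat s (w j') \<ge> s - e" using y[of k j'] sk by simp
      then have "sat s (w j') > 0" using e by simp
      then have "sat s (w j') \<le> w j'" by (rule sat_pos[OF s])
      then show ?thesis using \<open>sat s (w j') \<ge> s - e\<close> by simp
    qed
    have "(\<Sum>k\<in>UNIV. w k - (s - e)) = n * m - n * (s - e)"
      by (simp add: sum_subtractf sw n_def)
    also have "\<dots> \<le> n * e" using m n1 by (simp add: algebra_simps)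
    finally have S: "(\<Sum>k\<in>UNIV. w k - (s - e)) \<le> n * e" .
    have up: "w i' - (s - e) \<le> n * e" for i'
    proof -
      have "w i' - (s - e) \<le> (\<Sum>k\<in>UNIV. w k - (s - e))"
        using lo by (intro member_le_sum) auto
      then show ?thesis using S by simp
    qed
    show ?thesis using lo[of i] lo[of j] up[of i] up[of j] unfolding n_def by linarith
  next
    case False
    note F1 = this
    show ?thesis
    proof (cases "\<exists>k. w k < -s")
      case True
      then obtain k where k: "w k < -s" by blast
      then have sk: "sat s (w k) = -s" using sat_lo[OF s] by simp
      have hi: "w j' \<le> -s + e" for j'
      proof -
        have "sat s (w j') \<le> -s + e" using y[of j' k] sk by simp
        then have "sat s (w j') < 0" using e by simp
        then have "w j' \<le> sat s (w j')" by (rule sat_neg[OF s])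
        then show ?thesis using \<open>sat s (w j') \<le> -s + e\<close> by simp
      qed
      have "(\<Sum>k\<in>UNIV. (-s + e) - w k) = n * (-s + e) - n * m"
        by (simp add: sum_subtractf sw n_def)
      also have "\<dots> \<le> n * e"
      proof -
        have "n * (-s - m) \<le> 0" using m n1 by (intro mult_nonneg_nonpos) auto
        then show ?thesis by (simp add: algebra_simps)
      qed
      finally have S: "(\<Sum>k\<in>UNIV. (-s + e) - w k) \<le> n * e" .
      have up: "(-s + e) - w i' \<le> n * e" for i'
      proof -
        have "(-s + e) - w i' \<le> (\<Sum>k\<in>UNIV. (-s + e) - w k)"
          using hi by (intro member_le_sum) auto
        then show ?thesis using S by simp
      qed
      show ?thesis using hi[of i] hi[of j] up[of i] up[of j] unfolding n_def by linarith
    next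
      case False
      have "\<bar>w k\<bar> \<le> s" for k
      proof -
        have "\<not> w k < -s" "\<not> s < w k" using F1 False by auto
        then show ?thesis by (simp add: abs_le_iff not_less)
      qed
      then have "sat s (w k) = w k" for k using sat_id[OF s] by blast
      then have "\<bar>w i - w j\<bar> \<le> e" using y[of i j] by simp
      also have "\<dots> \<le> n * e" using n1 e by simp
      finally show ?thesis unfolding n_def .
    qed
  qed
qed

lemma conv_cauchy:
  fixes f :: "real \<Rightarrow> real"
  assumes "(f \<longlongrightarrow> (L::real)) at_top"
  shows "\<And>e. e > 0 \<Longrightarrow> \<exists>T. \<forall>a b. T \<le> a \<longrightarrow> T \<le> b \<longrightarrow> \<bar>f a - f b\<bar> < e"
proof -
  fix e :: real assume e: "e > 0"
  have "eventually (\<lambda>t. dist (f t) L < e / 2) at_top" by (rule tendstoD[OF assms]) (use e in simp)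
  then have "\<exists>T. \<forall>t\<ge>T. dist (f t) L < e / 2" by (simp only: eventually_at_top_linorder)
  then obtain T where T0: "\<forall>t\<ge>T. dist (f t) L < e / 2" by blast
  have T: "\<And>t. t \<ge> T \<Longrightarrow> dist (f t) L < e / 2" using T0 by blast
  have "\<forall>a b. T \<le> a \<longrightarrow> T \<le> b \<longrightarrow> \<bar>f a - f b\<bar> < e"
  proof (intro allI impI)
    fix a b assume "T \<le> a" "T \<le> b"
    then have "\<bar>f a - L\<bar> < e / 2" "\<bar>f b - L\<bar> < e / 2" using T by (auto simp: dist_real_def)
    then show "\<bar>f a - f b\<bar> < e" by linarith
  qed
  then show "\<exists>T. \<forall>a b. T \<le> a \<longrightarrow> T \<le> b \<longrightarrow> \<bar>f a - f b\<bar> < e" by blast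
qed

lemma lip_cdiv: "lip t0 f \<Longrightarrow> lip t0 (\<lambda>t. f t / c)"
proof -
  assume "lip t0 f"
  then obtain K where K: "K \<ge> 0" "\<And>a b. t0 \<le> a \<Longrightarrow> t0 \<le> b \<Longrightarrow> \<bar>f a - f b\<bar> \<le> K * \<bar>a - b\<bar>"
    by (metis lipE)
  have "\<forall>a b. t0 \<le> a \<longrightarrow> t0 \<le> b \<longrightarrow> \<bar>f a / c - f b / c\<bar> \<le> (K / \<bar>c\<bar>) * \<bar>a - b\<bar>"
  proof (intro allI impI)
    fix a b assume "t0 \<le> a" "t0 \<le> b"
    then have "\<bar>f a - f b\<bar> / \<bar>c\<bar> \<le> K * \<bar>a - b\<bar> / \<bar>c\<bar>" using K by (intro divide_right_mono) auto
    moreover have "\<bar>f a / c - f b / c\<bar> = \<bar>f a - f b\<bar> / \<bar>c\<bar>" by (simp add: diff_divide_distrib[symmetric])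
    ultimately show "\<bar>f a / c - f b / c\<bar> \<le> (K / \<bar>c\<bar>) * \<bar>a - b\<bar>" by simp
  qed
  then show ?thesis unfolding lip_def by blast
qed

context sys begin

lemma V_le: "t \<ge> t0 \<Longrightarrow> V t \<le> V t0" using V_mono by simp

lemma bnd_v: "bnd t0 (v i)"
proof -
  have "\<forall>t\<ge>t0. \<bar>v i t\<bar> \<le> 2 * V t0 + 1"
  proof (intro allI impI)
    fix t assume t: "t \<ge> t0"
    have "v i t * v i t \<le> P t" unfolding P_def by (intro member_le_sum) auto
    also have "\<dots> \<le> 2 * V t" unfolding V_def using Q_nonneg[of t] by simp
    also have "\<dots> \<le> 2 * V t0" using V_le[OF t] by simp
    finally show "\<bar>v i t\<bar> \<le> 2 * V t0 + 1" using abs_le_sq[of "v i t"] by linarith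
  qed
  then show ?thesis unfolding bnd_def by blast
qed

lemma Q_term: "\<alpha> i j * ((x i t - x j t) * (x i t - x j t)) \<le> Q t"
  unfolding Q_def by (rule le_dsum) (intro mult_nonneg_nonneg[OF nonneg zero_le_square])

lemma bnd_xd: "bnd t0 (\<lambda>t. x i t - x j t)"
proof (rule conn_pairs[OF conn, of "\<lambda>i j. bnd t0 (\<lambda>t. x i t - x j t)"])
  fix i j k assume "bnd t0 (\<lambda>t. x i t - x j t)" "bnd t0 (\<lambda>t. x j t - x k t)"
  from bnd_add[OF this] show "bnd t0 (\<lambda>t. x i t - x k t)" by simp
next
  fix i j assume a: "\<alpha> i j > 0"
  have "\<forall>t\<ge>t0. \<bar>x i t - x j t\<bar> \<le> 4 * V t0 / \<alpha> i j + 1"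
  proof (intro allI impI)
    fix t assume t: "t \<ge> t0"
    have "\<alpha> i j * ((x i t - x j t) * (x i t - x j t)) \<le> Q t" by (rule Q_term)
    also have "\<dots> \<le> 4 * V t" unfolding V_def using P_nonneg[of t] by simp
    also have "\<dots> \<le> 4 * V t0" using V_le[OF t] by simp
    finally have "(x i t - x j t) * (x i t - x j t) \<le> 4 * V t0 / \<alpha> i j"
      using a by (simp add: field_simps mult.commute)
    then show "\<bar>x i t - x j t\<bar> \<le> 4 * V t0 / \<alpha> i j + 1" using abs_le_sq[of "x i t - x j t"] by linarith
  qed
  then show "bnd t0 (\<lambda>t. x i t - x j t)" unfolding bnd_def by blast
qed simp

lemma bnd_y: "bnd t0 (y i)"
  unfolding bnd_def y_def using sat_bound[OF s_pos] by blast

lemma bnd_F: "bnd t0 (F i)"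
  unfolding F_def[abs_def]
  by (intro bnd_sum bnd_mult bnd_const bnd_add bnd_xd bnd_diff bnd_y)

lemma lip_v: "lip t0 (v i)" by (rule lip_deriv[OF dv' bnd_F])
lemma lip_x: "lip t0 (x i)" by (rule lip_deriv[OF dx bnd_v])
lemma lip_y: "lip t0 (y i)" unfolding y_def[abs_def] by (rule lip_sat[OF s_pos lip_v])

lemma lip_F: "lip t0 (F i)"
  unfolding F_def[abs_def]
  by (intro lip_sum lip_mult lip_const bnd_const lip_add lip_diff lip_x lip_y bnd_add bnd_xd bnd_diff bnd_y)

lemma lip_phi: "lip t0 (\<lambda>t. - \<phi> t)"
  unfolding \<phi>_def
  by (intro lip_uminus lip_cdiv lip_mult lip_sum lip_diff lip_v lip_y lip_const bnd_const bnd_sum bnd_mult bnd_diff bnd_v bnd_y)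

lemma V_cauchy: "e > 0 \<Longrightarrow> \<exists>T. \<forall>a b. T \<le> a \<longrightarrow> T \<le> b \<longrightarrow> \<bar>V a - V b\<bar> < e"
proof -
  assume e: "e > 0"
  define L where "L = Inf (V ` {t0..})"
  have bdd: "bdd_below (V ` {t0..})" using V_nonneg by (intro bdd_belowI[of _ 0]) auto
  have "\<exists>z\<in>V ` {t0..}. z < L + e" unfolding L_def
    by (rule cInf_lessD) (use e in auto)
  then obtain t1 where t1: "t1 \<ge> t0" "V t1 < L + e" by auto
  have lo: "L \<le> V a" if "a \<ge> t0" for a unfolding L_def using bdd that by (intro cInf_lower) auto
  have "\<forall>a b. t1 \<le> a \<longrightarrow> t1 \<le> b \<longrightarrow> \<bar>V a - V b\<bar> < e"
  proof (intro allI impI)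
    fix a b assume "t1 \<le> a" "t1 \<le> b"
    then have "V a \<le> V t1" "V b \<le> V t1" "L \<le> V a" "L \<le> V b" using V_mono lo t1 by auto
    then show "\<bar>V a - V b\<bar> < e" using t1 by linarith
  qed
  then show ?thesis by blast
qed

lemma phi_lim: "(\<phi> \<longlongrightarrow> 0) at_top"
proof -
  obtain K where K: "\<And>a b. t0 \<le> a \<Longrightarrow> t0 \<le> b \<Longrightarrow> \<bar>- \<phi> a - - \<phi> b\<bar> \<le> K * \<bar>a - b\<bar>"
    using lip_phi by (metis lipE)
  have "((\<lambda>t. - \<phi> t) \<longlongrightarrow> 0) at_top"
    by (rule barbalat[of t0 V "\<lambda>t. - \<phi> t" K, OF dV V_cauchy K])
  from tendsto_minus[OF this] show ?thesis by simp
qed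

lemma y_edge: "\<alpha> i j > 0 \<Longrightarrow> ((\<lambda>t. y i t - y j t) \<longlongrightarrow> 0) at_top"
proof -
  assume a: "\<alpha> i j > 0"
  have "\<alpha> i j * ((y i t - y j t) * (y i t - y j t)) \<le> 2 * \<phi> t" for t
  proof -
    have "(y i t - y j t) * (y i t - y j t) \<le> (v i t - v j t) * (y i t - y j t)"
      using sat_prod[OF s_pos, of "v i t" "v j t"] unfolding y_def by (simp add: power2_eq_square)
    then have "\<alpha> i j * ((y i t - y j t) * (y i t - y j t)) \<le> \<alpha> i j * ((v i t - v j t) * (y i t - y j t))"
      by (intro mult_left_mono nonneg)
    also have "\<dots> \<le> (\<Sum>i\<in>UNIV. \<Sum>j\<in>UNIV. \<alpha> i j * ((v i t - v j t) * (y i t - y j t)))"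
      by (rule le_dsum) (unfold y_def, intro mult_nonneg_nonneg[OF nonneg sat_prod_nonneg[OF s_pos]])
    also have "\<dots> = 2 * \<phi> t" unfolding phi_alt by simp
    finally show ?thesis .
  qed
  then have le: "(y i t - y j t) * (y i t - y j t) \<le> 2 * \<phi> t / \<alpha> i j" for t
    using a by (simp add: field_simps mult.commute)
  have "((\<lambda>t. 2 * \<phi> t / \<alpha> i j) \<longlongrightarrow> 2 * 0 / \<alpha> i j) at_top"
    using a by (intro tendsto_intros phi_lim) auto
  then have l: "((\<lambda>t. 2 * \<phi> t / \<alpha> i j) \<longlongrightarrow> 0) at_top" by simp
  have "((\<lambda>t. (y i t - y j t) * (y i t - y j t)) \<longlongrightarrow> 0) at_top"
    by (rule tendsto_sandwich[OF _ _ tendsto_const l]) (auto simp: le)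
  then show ?thesis by (rule tendsto_sq_zero)
qed

lemma y_all: "((\<lambda>t. y i t - y j t) \<longlongrightarrow> 0) at_top"
proof (rule conn_pairs[OF conn, of "\<lambda>i j. ((\<lambda>t. y i t - y j t) \<longlongrightarrow> 0) at_top"])
  fix i j k assume "((\<lambda>t. y i t - y j t) \<longlongrightarrow> 0) at_top" "((\<lambda>t. y j t - y k t) \<longlongrightarrow> 0) at_top"
  from tendsto_add[OF this] show "((\<lambda>t. y i t - y k t) \<longlongrightarrow> 0) at_top" by simp
qed (simp_all add: y_edge)

end



context sys begin

lemma v_diff_lim:
  assumes m: "\<bar>S0\<bar> / N \<le> s"
  shows "((\<lambda>t. v i t - v j t) \<longlongrightarrow> 0) at_top"
proof (rule tendstoI)
  fix \<epsilon> :: real assume \<epsilon>: "\<epsilon> > 0"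
  have N0: "N > 0" using N_pos by simp
  define e where "e = min (\<epsilon> / (2 * N)) (s / 2)"
  have e: "0 < e" "e < s" using \<epsilon> N0 s_pos unfolding e_def by auto
  have "N * e \<le> N * (\<epsilon> / (2 * N))" unfolding e_def using N0 by (intro mult_left_mono) auto
  then have Ne: "N * e \<le> \<epsilon> / 2" using N0 by simp
  have ev: "eventually (\<lambda>t. \<forall>i j. \<bar>y i t - y j t\<bar> < e) at_top"
  proof (intro eventually_all_finite)
    fix i j
    show "eventually (\<lambda>t. \<bar>y i t - y j t\<bar> < e) at_top"
      using tendstoD[OF y_all[of i j], of e] e by (simp add: dist_real_def)
  qed
  have "eventually (\<lambda>t. \<bar>v i t - v j t\<bar> < \<epsilon>) at_top"
    using ev eventually_ge_at_top[of t0]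
  proof eventually_elim
    case (elim t)
    have sw: "(\<Sum>k\<in>UNIV. v k t) = real CARD('n) * (S0 / N)"
      using sumv[OF elim(2)] N0 unfolding N_def by simp
    have mm: "\<bar>S0 / N\<bar> \<le> s" unfolding abs_divide using m N0 by simp
    have "\<And>i j. \<bar>sat s (v i t) - sat s (v j t)\<bar> \<le> e" using elim(1) unfolding y_def
      by (simp add: less_imp_le)
    from vspread[OF s_pos sw mm e this, of i j] have "\<bar>v i t - v j t\<bar> \<le> N * e" unfolding N_def .
    then show ?case using Ne \<epsilon> by linarith
  qed
  then show "eventually (\<lambda>t. dist (v i t - v j t) 0 < \<epsilon>) at_top" by (simp add: dist_real_def)
qed

lemma v_lim:
  assumes vd: "\<And>i j. ((\<lambda>t. v i t - v j t) \<longlongrightarrow> 0) at_top"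
  shows "(v i \<longlongrightarrow> S0 / N) at_top"
proof -
  have N0: "N > 0" using N_pos by simp
  have "((\<lambda>t. (\<Sum>j\<in>UNIV. v i t - v j t) / N) \<longlongrightarrow> 0 / N) at_top"
    by (intro tendsto_divide tendsto_null_sum vd) (use N0 in auto)
  then have l: "((\<lambda>t. (\<Sum>j\<in>UNIV. v i t - v j t) / N) \<longlongrightarrow> 0) at_top" by simp
  have "eventually (\<lambda>t. (\<Sum>j\<in>UNIV. v i t - v j t) / N = v i t - S0 / N) at_top"
    using eventually_ge_at_top[of t0]
  proof eventually_elim
    case (elim t)
    have "(\<Sum>j\<in>UNIV. v i t - v j t) = N * v i t - S0"
      by (simp add: sum_subtractf sumv[OF elim] N_def)
    then show ?case using N0 by (simp add: field_simps)
  qed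
  with l have "((\<lambda>t. v i t - S0 / N) \<longlongrightarrow> 0) at_top" using tendsto_cong by fastforce
  then show ?thesis by (rule LIM_zero_cancel)
qed

lemma F_lim:
  assumes vd: "\<And>i j. ((\<lambda>t. v i t - v j t) \<longlongrightarrow> 0) at_top"
  shows "(F i \<longlongrightarrow> 0) at_top"
proof -
  obtain K where K: "\<And>a b. t0 \<le> a \<Longrightarrow> t0 \<le> b \<Longrightarrow> \<bar>F i a - F i b\<bar> \<le> K * \<bar>a - b\<bar>"
    using lip_F by (metis lipE)
  show ?thesis by (rule barbalat[OF dv' conv_cauchy[OF v_lim[OF vd]] K])
qed

lemma G_lim:
  assumes vd: "\<And>i j. ((\<lambda>t. v i t - v j t) \<longlongrightarrow> 0) at_top"
  shows "((\<lambda>t. \<Sum>j\<in>UNIV. \<alpha> i j * (x j t - x i t)) \<longlongrightarrow> 0) at_top"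
proof -
  have H: "((\<lambda>t. \<Sum>j\<in>UNIV. \<alpha> i j * (y j t - y i t)) \<longlongrightarrow> 0) at_top"
    by (intro tendsto_null_sum tendsto_mult_right_zero y_all)
  have eq: "(\<Sum>j\<in>UNIV. \<alpha> i j * (x j t - x i t)) = F i t - (\<Sum>j\<in>UNIV. \<alpha> i j * (y j t - y i t))" for t
    unfolding F_def by (simp add: sum_subtractf[symmetric] algebra_simps)
  from tendsto_diff[OF F_lim[OF vd] H] show ?thesis unfolding eq by simp
qed

lemma Q_lim:
  assumes vd: "\<And>i j. ((\<lambda>t. v i t - v j t) \<longlongrightarrow> 0) at_top"
  shows "(Q \<longlongrightarrow> 0) at_top"
proof -
  define k :: 'n where "k = undefined"
  have R: "((\<lambda>t. \<Sum>i\<in>UNIV. (x i t - x k t) * (\<Sum>j\<in>UNIV. \<alpha> i j * (x j t - x i t))) \<longlongrightarrow> 0) at_top"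
    by (intro tendsto_null_sum bnd_tendsto_mult[OF bnd_xd G_lim[OF vd]])
  have eq: "(\<Sum>i\<in>UNIV. (x i t - x k t) * (\<Sum>j\<in>UNIV. \<alpha> i j * (x j t - x i t))) = - Q t / 2" for t
  proof -
    have "(\<Sum>i\<in>UNIV. (x i t - x k t) * (\<Sum>j\<in>UNIV. \<alpha> i j * (x j t - x i t)))
      = (\<Sum>i\<in>UNIV. \<Sum>j\<in>UNIV. \<alpha> i j * (x i t - x k t) * ((x j t - x k t) - (x i t - x k t)))"
      unfolding sum_distrib_left by (intro sum.cong refl) (simp add: algebra_simps)
    also have "\<dots> = - (\<Sum>i\<in>UNIV. \<Sum>j\<in>UNIV. \<alpha> i j * ((x i t - x k t) - (x j t - x k t)) * ((x i t - x k t) - (x j t - x k t))) / 2"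
      by (rule sym_sum[OF sym])
    also have "\<dots> = - Q t / 2" unfolding Q_def by (simp add: mult.assoc)
    finally show ?thesis .
  qed
  from tendsto_mult_right_zero[OF R[unfolded eq], of "-2"] show ?thesis by simp
qed

lemma x_diff_lim:
  assumes vd: "\<And>i j. ((\<lambda>t. v i t - v j t) \<longlongrightarrow> 0) at_top"
  shows "((\<lambda>t. x i t - x j t) \<longlongrightarrow> 0) at_top"
proof (rule conn_pairs[OF conn, of "\<lambda>i j. ((\<lambda>t. x i t - x j t) \<longlongrightarrow> 0) at_top"])
  fix i j k assume "((\<lambda>t. x i t - x j t) \<longlongrightarrow> 0) at_top" "((\<lambda>t. x j t - x k t) \<longlongrightarrow> 0) at_top"
  from tendsto_add[OF this] show "((\<lambda>t. x i t - x k t) \<longlongrightarrow> 0) at_top" by simp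
next
  fix i j assume a: "\<alpha> i j > 0"
  have le: "(x i t - x j t) * (x i t - x j t) \<le> Q t / \<alpha> i j" for t
    using Q_term[of i j t] a by (simp add: field_simps mult.commute)
  have "((\<lambda>t. Q t / \<alpha> i j) \<longlongrightarrow> 0 / \<alpha> i j) at_top"
    using a by (intro tendsto_intros Q_lim[OF vd]) auto
  then have l: "((\<lambda>t. Q t / \<alpha> i j) \<longlongrightarrow> 0) at_top" by simp
  have "((\<lambda>t. (x i t - x j t) * (x i t - x j t)) \<longlongrightarrow> 0) at_top"
    by (rule tendsto_sandwich[OF _ _ tendsto_const l]) (auto simp: le)
  then show "((\<lambda>t. x i t - x j t) \<longlongrightarrow> 0) at_top" by (rule tendsto_sq_zero)
qed simp

lemma if_dir:
  assumes "\<bar>S0\<bar> / N \<le> s"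
  shows "\<forall>i j. ((\<lambda>t. x i t - x j t) \<longlongrightarrow> 0) at_top \<and> ((\<lambda>t. v i t - v j t) \<longlongrightarrow> 0) at_top"
  using x_diff_lim v_diff_lim[OF assms] by blast

end



lemma dsum_sym:
  fixes f :: "'n::finite \<Rightarrow> real"
  shows "(\<Sum>i\<in>UNIV. \<Sum>j\<in>UNIV. f i + f j) = 2 * real CARD('n) * (\<Sum>i\<in>UNIV. f i)"
proof -
  have "(\<Sum>i\<in>UNIV. \<Sum>j\<in>UNIV. f i + f j) = (\<Sum>i\<in>UNIV. real CARD('n) * f i + (\<Sum>j\<in>UNIV. f j))"
    by (simp add: sum.distrib)
  also have "\<dots> = real CARD('n) * (\<Sum>i\<in>UNIV. f i) + real CARD('n) * (\<Sum>j\<in>UNIV. f j)"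
    by (simp add: sum.distrib sum_distrib_left)
  finally show ?thesis by simp
qed

context sys begin

definition W where "W t = V t - S0 * S0 / (2 * N)"

lemma W_alt: "t \<ge> t0 \<Longrightarrow> W t = (\<Sum>i\<in>UNIV. (v i t - S0 / N) * (v i t - S0 / N)) / 2 + Q t / 4"
proof -
  assume t: "t \<ge> t0"
  have N0: "N > 0" using N_pos by simp
  define m where "m = S0 / N"
  have "(\<Sum>i\<in>UNIV. (v i t - m) * (v i t - m)) = (\<Sum>i\<in>UNIV. v i t * v i t - 2 * m * v i t + m * m)"
    by (intro sum.cong refl) (simp add: algebra_simps)
  also have "\<dots> = P t - 2 * m * S0 + N * (m * m)"
    unfolding P_def by (simp add: sum.distrib sum_subtractf sum_distrib_left[symmetric] sumv[OF t] N_def)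
  also have "\<dots> = P t - S0 * S0 / N" unfolding m_def using N0 by (simp add: field_simps)
  finally have e: "(\<Sum>i\<in>UNIV. (v i t - m) * (v i t - m)) = P t - S0 * S0 / N" .
  show ?thesis unfolding W_def V_def m_def[symmetric] e using N0 by (simp add: field_simps)
qed

lemma sq_sum_nonneg: "(\<Sum>i\<in>UNIV. (v i t - S0 / N) * (v i t - S0 / N)) \<ge> 0"
  by (intro sum_nonneg) auto

lemma W_t0_pos:
  assumes nc: "\<not> ((\<forall>i j. x i t0 = x j t0) \<and> (\<forall>i j. v i t0 = v j t0))"
  shows "W t0 > 0"
proof (rule ccontr)
  assume "\<not> W t0 > 0"
  then have W0: "(\<Sum>i\<in>UNIV. (v i t0 - S0 / N) * (v i t0 - S0 / N)) / 2 + Q t0 / 4 \<le> 0"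
    using W_alt[of t0] by simp
  then have s0: "(\<Sum>i\<in>UNIV. (v i t0 - S0 / N) * (v i t0 - S0 / N)) = 0" and q0: "Q t0 = 0"
    using sq_sum_nonneg[of t0] Q_nonneg[of t0] by linarith+
  have "v i t0 = S0 / N" for i
  proof -
    have "(v i t0 - S0 / N) * (v i t0 - S0 / N) = 0"
      using s0 by (subst (asm) sum_nonneg_eq_0_iff) auto
    then show ?thesis by simp
  qed
  then have vv: "\<forall>i j. v i t0 = v j t0" by simp
  have "x i t0 = x j t0" for i j
  proof (rule conn_pairs[OF conn, of "\<lambda>i j. x i t0 = x j t0"])
    fix i j assume a: "\<alpha> i j > 0"
    have "\<alpha> i j * ((x i t0 - x j t0) * (x i t0 - x j t0)) \<le> 0" using Q_term[of i j t0] q0 by simp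
    then have "(x i t0 - x j t0) * (x i t0 - x j t0) \<le> 0" using a by (simp add: mult_le_0_iff)
    then show "x i t0 = x j t0" by (auto simp: mult_le_0_iff)
  qed simp_all
  with vv nc show False by blast
qed

lemma dW: "t \<ge> t0 \<Longrightarrow> (W has_real_derivative - \<phi> t) (at t within {t0..})"
  unfolding W_def[abs_def] using DERIV_diff[OF dV DERIV_const] by simp

definition A where "A = (\<Sum>i\<in>UNIV. \<Sum>j\<in>UNIV. \<alpha> i j)"
definition C where "C = 4 * A * N"

lemma A_nonneg: "A \<ge> 0" unfolding A_def using nonneg by (intro sum_nonneg) auto

lemma phi_le: "t \<ge> t0 \<Longrightarrow> \<phi> t \<le> C * W t"
proof -
  assume t: "t \<ge> t0"
  define p where "p i = v i t - S0 / N" for i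
  have tm: "\<alpha> i j * ((v i t - v j t) * (y i t - y j t)) \<le> A * (2 * (p i * p i) + 2 * (p j * p j))" for i j
  proof -
    have "(v i t - v j t) * (y i t - y j t) \<le> \<bar>v i t - v j t\<bar> * \<bar>y i t - y j t\<bar>"
      by (metis abs_ge_self abs_mult)
    also have "\<dots> \<le> \<bar>v i t - v j t\<bar> * \<bar>v i t - v j t\<bar>"
      unfolding y_def by (intro mult_left_mono sat_lip[OF s_pos]) auto
    also have "\<dots> = (p i - p j) * (p i - p j)" unfolding p_def by (simp add: abs_mult_self_eq)
    also have "\<dots> \<le> 2 * (p i * p i) + 2 * (p j * p j)"
      using zero_le_square[of "p i + p j"] by (simp add: algebra_simps)
    finally have a1: "(v i t - v j t) * (y i t - y j t) \<le> 2 * (p i * p i) + 2 * (p j * p j)" .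
    have "\<alpha> i j * ((v i t - v j t) * (y i t - y j t)) \<le> \<alpha> i j * (2 * (p i * p i) + 2 * (p j * p j))"
      by (intro mult_left_mono a1 nonneg)
    also have "\<dots> \<le> A * (2 * (p i * p i) + 2 * (p j * p j))"
      unfolding A_def by (intro mult_right_mono le_dsum nonneg) auto
    finally show ?thesis .
  qed
  have "2 * \<phi> t \<le> (\<Sum>i\<in>UNIV. \<Sum>j\<in>UNIV. A * (2 * (p i * p i) + 2 * (p j * p j)))"
    unfolding phi_alt by (simp add: sum_mono tm)
  also have "\<dots> = A * (\<Sum>i\<in>UNIV. \<Sum>j\<in>UNIV. 2 * (p i * p i) + 2 * (p j * p j))"
    by (simp add: sum_distrib_left)
  also have "\<dots> = A * (2 * N * (\<Sum>i\<in>UNIV. 2 * (p i * p i)))"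
    unfolding dsum_sym N_def ..
  also have "\<dots> = A * (4 * N * (\<Sum>i\<in>UNIV. p i * p i))"
    by (simp add: sum_distrib_left[symmetric])
  also have "\<dots> \<le> A * (4 * N * (2 * W t))"
  proof -
    have "(\<Sum>i\<in>UNIV. p i * p i) \<le> 2 * W t" unfolding W_alt[OF t] p_def using Q_nonneg[of t] by simp
    then show ?thesis using A_nonneg N_pos by (intro mult_left_mono) auto
  qed
  finally show ?thesis unfolding C_def by (simp add: algebra_simps)
qed

lemma W_pos:
  assumes W0: "W t0 > 0" and t: "t \<ge> t0"
  shows "W t > 0"
proof -
  define g where "g t = W t * exp (C * (t - t0))" for t
  have dg: "(g has_real_derivative (- \<phi> t) * exp (C * (t - t0)) + (exp (C * (t - t0)) * C) * W t)
      (at t within {t0..})" if "t \<ge> t0" for t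
    unfolding g_def[abs_def]
    by (rule DERIV_mult[OF dW[OF that]]) (auto intro!: derivative_eq_intros)
  have nn: "(- \<phi> t) * exp (C * (t - t0)) + (exp (C * (t - t0)) * C) * W t \<ge> 0" if "t \<ge> t0" for t
  proof -
    have "(- \<phi> t) * exp (C * (t - t0)) + (exp (C * (t - t0)) * C) * W t = exp (C * (t - t0)) * (C * W t - \<phi> t)"
      by (simp add: algebra_simps)
    moreover have "C * W t - \<phi> t \<ge> 0" using phi_le[OF that] by simp
    ultimately show ?thesis by simp
  qed
  have "g t0 \<le> g t" by (rule deriv_mono[OF dg nn _ t]) auto
  then have "W t * exp (C * (t - t0)) > 0" using W0 unfolding g_def by simp
  then show ?thesis by (simp add: zero_less_mult_iff)
qed

lemma only_if:
  assumes nc: "\<not> ((\<forall>i j. x i t0 = x j t0) \<and> (\<forall>i j. v i t0 = v j t0))"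
    and cv: "\<forall>i j. ((\<lambda>t. x i t - x j t) \<longlongrightarrow> 0) at_top \<and> ((\<lambda>t. v i t - v j t) \<longlongrightarrow> 0) at_top"
  shows "\<bar>S0\<bar> / N \<le> s"
proof (rule ccontr)
  assume "\<not> \<bar>S0\<bar> / N \<le> s"
  define m where "m = S0 / N"
  have N0: "N > 0" using N_pos by simp
  have ms: "\<bar>m\<bar> > s" using \<open>\<not> \<bar>S0\<bar> / N \<le> s\<close> N0 unfolding m_def abs_divide by simp
  have vd: "\<And>i j. ((\<lambda>t. v i t - v j t) \<longlongrightarrow> 0) at_top" using cv by blast
  have xd: "\<And>i j. ((\<lambda>t. x i t - x j t) \<longlongrightarrow> 0) at_top" using cv by blast
  have vl: "\<And>i. (v i \<longlongrightarrow> m) at_top" unfolding m_def by (rule v_lim[OF vd])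
  have "eventually (\<lambda>t. \<forall>i. dist (v i t) m < \<bar>m\<bar> - s) at_top"
    using ms by (intro eventually_all_finite tendstoD vl) simp
  then have "eventually (\<lambda>t. t \<ge> t0 \<and> (\<forall>i. dist (v i t) m < \<bar>m\<bar> - s)) at_top"
    using eventually_conj[OF eventually_ge_at_top[of t0]] by simp
  then have "\<exists>T. \<forall>t\<ge>T. t \<ge> t0 \<and> (\<forall>i. dist (v i t) m < \<bar>m\<bar> - s)"
    by (simp only: eventually_at_top_linorder)
  then obtain T where T: "\<forall>t\<ge>T. t \<ge> t0 \<and> (\<forall>i. dist (v i t) m < \<bar>m\<bar> - s)" by blast
  have T0: "T \<ge> t0" using T by auto
  have phi0: "\<phi> t = 0" if "t \<ge> T" for t
  proof -
    have cl: "\<And>i. \<bar>v i t - m\<bar> < \<bar>m\<bar> - s" using T that by (auto simp: dist_real_def)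
    have "\<exists>c. \<forall>i. y i t = c"
    proof (cases "m > 0")
      case True
      then have "\<And>i. v i t \<ge> s" using cl by (smt (verit))
      then show ?thesis unfolding y_def using sat_hi[OF s_pos] by blast
    next
      case False
      then have "\<And>i. v i t \<le> -s" using cl by (smt (verit))
      then show ?thesis unfolding y_def using sat_lo[OF s_pos] by blast
    qed
    then show ?thesis unfolding \<phi>_def by auto
  qed
  have Wc: "W t = W T" if "t \<ge> T" for t
    by (rule deriv_const[OF dW, of T]) (use T0 that phi0 in auto)
  have l1: "((\<lambda>t. W t) \<longlongrightarrow> W T) at_top"
  proof -
    have "eventually (\<lambda>t. W T = W t) at_top"
      by (rule eventually_mono[OF eventually_ge_at_top[of T]]) (metis Wc)
    from tendsto_cong[of "\<lambda>t. W T" W, OF this, of "W T"] show ?thesis by simp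
  qed
  have Ql: "(Q \<longlongrightarrow> 0) at_top"
    unfolding Q_def[abs_def]
    by (intro tendsto_null_sum tendsto_mult_right_zero) (rule tendsto_mult_zero[OF xd xd])
  have Sl: "((\<lambda>t. \<Sum>i\<in>UNIV. (v i t - S0 / N) * (v i t - S0 / N)) \<longlongrightarrow> 0) at_top"
    using vl unfolding m_def
    by (intro tendsto_null_sum tendsto_mult_zero) (auto intro: LIM_zero)
  have "((\<lambda>t. (\<Sum>i\<in>UNIV. (v i t - S0 / N) * (v i t - S0 / N)) / 2 + Q t / 4) \<longlongrightarrow> 0 / 2 + 0 / 4) at_top"
    by (intro tendsto_intros Sl Ql) auto
  then have l0: "((\<lambda>t. (\<Sum>i\<in>UNIV. (v i t - S0 / N) * (v i t - S0 / N)) / 2 + Q t / 4) \<longlongrightarrow> 0) at_top"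
    by simp
  have ev:  "eventually (\<lambda>t. (\<Sum>i\<in>UNIV. (v i t - S0 / N) * (v i t - S0 / N)) / 2 + Q t / 4 = W t) at_top"
    by (rule eventually_mono[OF eventually_ge_at_top[of t0]]) (simp add: W_alt)
  from tendsto_cong[OF ev, of 0] l0 have l2: "(W \<longlongrightarrow> 0) at_top" by simp
  have "W T = 0" using tendsto_unique[OF _ l1 l2] by simp
  moreover have "W T > 0" using W_pos[OF W_t0_pos[OF nc] T0] .
  ultimately show False by simp
qed

end

theorem theorem4:
  fixes \<alpha> :: "'n::finite \<Rightarrow> 'n \<Rightarrow> real"
    and s t0 :: real
    and x v :: "'n \<Rightarrow> real \<Rightarrow> real"
  assumes sym: "\<And>i j. \<alpha> i j = \<alpha> j i"
    and nonneg: "\<And>i j. \<alpha> i j \<ge> 0"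
    and conn: "graph_connected \<alpha>"
    and s_pos: "s > 0"
    and dx: "\<And>i t. t \<ge> t0 \<Longrightarrow> (x i has_real_derivative v i t) (at t within {t0..})"
    and dv: "\<And>i t. t \<ge> t0 \<Longrightarrow>
       (v i has_real_derivative
          (\<Sum>j\<in>UNIV. \<alpha> i j * ((x j t - x i t) + (sat s (v j t) - sat s (v i t)))))
        (at t within {t0..})"
    and not_cons: "\<not> ((\<forall>i j. x i t0 = x j t0) \<and> (\<forall>i j. v i t0 = v j t0))"
  shows "(\<forall>i j. ((\<lambda>t. x i t - x j t) \<longlongrightarrow> 0) at_top \<and>
                ((\<lambda>t. v i t - v j t) \<longlongrightarrow> 0) at_top)
         \<longleftrightarrow> \<bar>\<Sum>i\<in>UNIV. v i t0\<bar> / real CARD('n) \<le> s"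
proof -
  interpret sys \<alpha> s t0 x v using assms by unfold_locales
  show ?thesis using if_dir only_if[OF not_cons] unfolding S0_def N_def by blast
qed

end
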